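(* For every coalition $C$ and every formula $\phi\in\Phi$, $\vdash \neg\mathsf{H}_C\phi\to\mathsf{K}_C\neg\mathsf{H}_C\phi$.
   Context: Fix a set of agents $\mathcal{A}$; a coalition is a subset of $\mathcal{A}$. The language $\Phi$: $\phi ::= p \mid \neg\phi \mid \phi\to\phi \mid \mathsf{K}_C\phi \mid \mathsf{H}_C\phi$ ($p$ propositional variable, $C\subseteq\mathcal{A}$). Axioms: propositional tautologies; Truth $\mathsf{K}_C\phi\to\phi$; Negative Introspection $\neg\mathsf{K}_C\phi\to\mathsf{K}_C\neg\mathsf{K}_C\phi$; Distributivity $\mathsf{K}_C(\phi\to\psi)\to(\mathsf{K}_C\phi\to\mathsf{K}_C\psi)$; Monotonicity $\mathsf{K}_C\phi\to\mathsf{K}_D\phi$ for $C\subseteq D$; Strategic Positive Introspection $\mathsf{H}_C\phi\to\mathsf{K}_C\mathsf{H}_C\phi$; Cooperation $\mathsf{H}_C(\phi\to\psi)\to(\mathsf{H}_D\phi\to\mathsf{H}_{C\cup D}\psi)$ for $C\cap D=\varnothing$; Empty Coalition $\mathsf{K}_\varnothing\phi\to\mathsf{H}_\varnothing\phi$; Perfect Recall $\mathsf{H}_D\phi\to\mathsf{H}_D\mathsf{K}_C\phi$ for $D\subseteq C\neq\varnothing$; Unachievability of Falsehood $\neg\mathsf{H}_C\bot$. Rules: Necessitation ($\phi/\mathsf{K}_C\phi$), Strategic Necessitation ($\phi/\mathsf{H}_C\phi$), Modus Ponens. $\vdash\phi$ means $\phi$ is derivable. *)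

theory Defs
  imports Main
begin

datatype ('a, 'p) fm =
    Var 'p
  | Neg "('a, 'p) fm"
  | Imp "('a, 'p) fm" "('a, 'p) fm"
  | K "'a set" "('a, 'p) fm"
  | H "'a set" "('a, 'p) fm"

definition Bot :: "('a, 'p) fm" where
  "Bot = Neg (Imp (Var undefined) (Var undefined))"

fun peval :: "(('a, 'p) fm \<Rightarrow> bool) \<Rightarrow> ('a, 'p) fm \<Rightarrow> bool" where
  "peval v (Var p) = v (Var p)"
| "peval v (Neg f) = (\<not> peval v f)"
| "peval v (Imp f g) = (peval v f \<longrightarrow> peval v g)"
| "peval v (K C f) = v (K C f)"
| "peval v (H C f) = v (H C f)"

definition tautology :: "('a, 'p) fm \<Rightarrow> bool" where
  "tautology f \<longleftrightarrow> (\<forall>v. peval v f)"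

inductive derivable :: "('a, 'p) fm \<Rightarrow> bool" ("\<turnstile> _" [40] 40) where
  Taut: "tautology f \<Longrightarrow> \<turnstile> f"
| Truth: "\<turnstile> Imp (K C f) f"
| NegIntro: "\<turnstile> Imp (Neg (K C f)) (K C (Neg (K C f)))"
| Distr: "\<turnstile> Imp (K C (Imp f g)) (Imp (K C f) (K C g))"
| Mono: "C \<subseteq> D \<Longrightarrow> \<turnstile> Imp (K C f) (K D f)"
| SPosIntro: "\<turnstile> Imp (H C f) (K C (H C f))"
| Coop: "C \<inter> D = {} \<Longrightarrow> \<turnstile> Imp (H C (Imp f g)) (Imp (H D f) (H (C \<union> D) g))"
| EmptyC: "\<turnstile> Imp (K {} f) (H {} f)"
| PerfRecall: "D \<subseteq> C \<Longrightarrow> C \<noteq> {} \<Longrightarrow> \<turnstile> Imp (H D f) (H D (K C f))"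
| Unach: "\<turnstile> Neg (H C Bot)"
| Nec: "\<turnstile> f \<Longrightarrow> \<turnstile> K C f"
| SNec: "\<turnstile> f \<Longrightarrow> \<turnstile> H C f"
| MP: "\<turnstile> f \<Longrightarrow> \<turnstile> Imp f g \<Longrightarrow> \<turnstile> g"

end

theory Submission
  imports Defs
begin

lemma trans_imp:
  assumes "\<turnstile> Imp a b" "\<turnstile> Imp b c" shows "\<turnstile> Imp a c"
proof -
  have "\<turnstile> Imp (Imp a b) (Imp (Imp b c) (Imp a c))"
    by (rule Taut) (auto simp add: tautology_def)
  then show ?thesis using assms by (meson MP)
qed

lemma contra:
  assumes "\<turnstile> Imp a b" shows "\<turnstile> Imp (Neg b) (Neg a)"
proof -
  have "\<turnstile> Imp (Imp a b) (Imp (Neg b) (Neg a))"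
    by (rule Taut) (auto simp add: tautology_def)
  then show ?thesis using assms by (meson MP)
qed

theorem lemma7:
  fixes C :: "'a set" and \<phi> :: "('a, 'p) fm"
  shows "\<turnstile> Imp (Neg (H C \<phi>)) (K C (Neg (H C \<phi>)))"
proof -
  let ?h = "H C \<phi>"
  have 1: "\<turnstile> Imp (Neg ?h) (Neg (K C ?h))" by (rule contra[OF Truth])
  have 2: "\<turnstile> Imp (Neg (K C ?h)) (K C (Neg (K C ?h)))" by (rule NegIntro)
  have 3: "\<turnstile> K C (Imp (Neg (K C ?h)) (Neg ?h))" by (rule Nec[OF contra[OF SPosIntro]])
  have 4: "\<turnstile> Imp (K C (Neg (K C ?h))) (K C (Neg ?h))" by (rule MP[OF 3 Distr])
  show ?thesis by (rule trans_imp[OF trans_imp[OF 1 2] 4])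
qed

end
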